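(* Let $f:[0,1]\to\mathbb{R}$ be bounded and let $0<b<1$. Assume that $f(t)=c$ for all $t\in[0,b)$, for some real constant $c$. Then for every $n\in\mathbb{N}$ and every $x\in(0,b)$, \[ |B_nf(x)-f(x)|\leq \|f-c\|\,e^{-nr(x,b)}. \]
   Context: For a bounded function $f:[0,1]\to\mathbb{R}$, $\|f\|=\sup_{t\in[0,1]}|f(t)|$, and $\|f-c\|$ is the supremum norm of $t\mapsto f(t)-c$. The $n$th Bernstein polynomial of $f$ is $B_nf(x)=\sum_{j=0}^n f(j/n)\binom{n}{j}x^j(1-x)^{n-j}$, $x\in[0,1]$. For $x,\theta\in(0,1)$, $r(x,\theta)=\theta\log\frac{\theta}{x}+(1-\theta)\log\frac{1-\theta}{1-x}$. *)

theory Defs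
  imports "HOL-Analysis.Analysis"
begin

definition supnorm01 :: "(real \<Rightarrow> real) \<Rightarrow> real" where
  "supnorm01 g = (SUP t\<in>{0..1}. \<bar>g t\<bar>)"

definition bernstein :: "nat \<Rightarrow> (real \<Rightarrow> real) \<Rightarrow> real \<Rightarrow> real" where
  "bernstein n f x = (\<Sum>j=0..n. f (real j / real n) * real (n choose j) * x ^ j * (1 - x) ^ (n - j))"

definition rfun :: "real \<Rightarrow> real \<Rightarrow> real" where
  "rfun x \<theta> = \<theta> * ln (\<theta> / x) + (1 - \<theta>) * ln ((1 - \<theta>) / (1 - x))"

end

theory Submission
  imports Defs
begin

lemma chernoff_identity:
  fixes n :: nat and x b :: real
  assumes x: "0 < x" "x < b" and b: "b < 1"
  defines "s \<equiv> b * (1 - x) / (x * (1 - b))"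
  shows "s powr (- (real n * b)) * (x * s + (1 - x)) ^ n = exp (- real n * rfun x b)"
proof -
  have s0: "s > 0" using x b unfolding s_def by (auto intro!: divide_pos_pos mult_pos_pos)
  have e: "x * s + (1 - x) = (1 - x) / (1 - b)"
    using x b unfolding s_def by (simp add: field_simps)
  have pos: "(1 - x) / (1 - b) > 0" using x b by auto
  have "(x * s + (1 - x)) ^ n = exp (real n * ln ((1 - x) / (1 - b)))"
    using pos e by (simp add: exp_of_nat_mult)
  moreover have "s powr (- (real n * b)) = exp (- (real n * b) * ln s)"
    using s0 by (simp add: powr_def mult.commute)
  moreover have "ln s = ln b + ln (1 - x) - ln x - ln (1 - b)"
    using x b unfolding s_def by (simp add: ln_div ln_mult)
  moreover have "rfun x b = b * (ln b - ln x) + (1 - b) * (ln (1 - b) - ln (1 - x))"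
    using x b unfolding rfun_def by (simp add: ln_div)
  moreover have "ln ((1 - x) / (1 - b)) = ln (1 - x) - ln (1 - b)"
    using x b by (simp add: ln_div)
  ultimately have "s powr (- (real n * b)) * (x * s + (1 - x)) ^ n
     = exp (- (real n * b) * (ln b + ln (1 - x) - ln x - ln (1 - b)) + real n * (ln (1 - x) - ln (1 - b)))"
    by (simp only: exp_add[symmetric])
  also have "\<dots> = exp (- real n * rfun x b)"
    unfolding \<open>rfun x b = _\<close> by (simp add: algebra_simps)
  finally show ?thesis .
qed

theorem corollary1:
  fixes f :: "real \<Rightarrow> real" and b c :: real
  assumes "bounded (f ` {0..1})"
    and "0 < b" and "b < 1"
    and "\<And>t. t \<in> {0..<b} \<Longrightarrow> f t = c"
  shows "\<forall>n::nat. \<forall>x\<in>{0<..<b}.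
           \<bar>bernstein n f x - f x\<bar> \<le> supnorm01 (\<lambda>t. f t - c) * exp (- real n * rfun x b)"
proof (intro allI ballI)
  fix n :: nat and x :: real
  assume xin: "x \<in> {0<..<b}"
  hence x: "0 < x" "x < b" by auto
  define M where "M = supnorm01 (\<lambda>t. f t - c)"
  have bdd: "bdd_above ((\<lambda>t. \<bar>f t - c\<bar>) ` {0..1})"
  proof -
    obtain B where B: "\<forall>y\<in>f ` {0..1}. norm y \<le> B"
      using assms(1) unfolding bounded_iff by auto
    have "\<bar>f t - c\<bar> \<le> B + \<bar>c\<bar>" if "t \<in> {0..1}" for t
    proof -
      have "\<bar>f t\<bar> \<le> B" using B that by auto
      thus ?thesis by linarith
    qed
    thus ?thesis by (intro bdd_aboveI2) auto
  qed
  have Mle: "\<bar>f t - c\<bar> \<le> M" if "t \<in> {0..1}" for t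
    unfolding M_def supnorm01_def using that bdd by (intro cSUP_upper) auto
  have M0: "M \<ge> 0" using Mle[of 0] by (meson abs_ge_zero atLeastAtMost_iff order_trans zero_le_one order_refl)
  have fx: "f x = c" using assms(4) x by auto
  define p where "p j = real (n choose j) * x ^ j * (1 - x) ^ (n - j)" for j
  have p0: "p j \<ge> 0" for j using x assms unfolding p_def by auto
  have sump: "(\<Sum>j=0..n. p j) = 1"
    using binomial_ring[of x "1 - x" n] unfolding p_def by (simp add: atMost_atLeast0)
  define s where "s = b * (1 - x) / (x * (1 - b))"
  have s1: "s \<ge> 1" using x assms(3) unfolding s_def by (simp add: field_simps mult_right_mono)
  have "bernstein n f x - f x = (\<Sum>j=0..n. (f (real j / real n) - c) * p j)"
    unfolding bernstein_def fx using sump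
    by (simp add: sum_subtractf p_def algebra_simps sum_distrib_left[symmetric])
  hence "\<bar>bernstein n f x - f x\<bar> \<le> (\<Sum>j=0..n. \<bar>f (real j / real n) - c\<bar> * p j)"
    using p0 by (simp add: sum_abs[THEN order_trans] abs_mult)
  also have "\<dots> \<le> (\<Sum>j=0..n. M * s powr (real j - real n * b) * p j)"
  proof (rule sum_mono)
    fix j assume j: "j \<in> {0..n}"
    have "\<bar>f (real j / real n) - c\<bar> \<le> M * s powr (real j - real n * b)"
    proof (cases "real j / real n < b")
      case True
      thus ?thesis using assms(4)[of "real j / real n"] M0 by auto
    next
      case False
      hence n0: "n > 0" using assms(2) by (cases n) auto
      hence "real j \<ge> real n * b" using False by (simp add: field_simps)
      hence "s powr (real j - real n * b) \<ge> 1" using s1 by (simp add: ge_one_powr_ge_zero)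
      moreover have "\<bar>f (real j / real n) - c\<bar> \<le> M" using j n0 by (intro Mle) auto
      ultimately have "M * 1 \<le> M * s powr (real j - real n * b)"
        using M0 by (intro mult_left_mono) auto
      thus ?thesis using \<open>\<bar>f (real j / real n) - c\<bar> \<le> M\<close> by linarith
    qed
    thus "\<bar>f (real j / real n) - c\<bar> * p j \<le> M * s powr (real j - real n * b) * p j"
      using p0 by (simp add: mult_right_mono)
  qed
  also have "\<dots> = M * (s powr (- (real n * b)) * (\<Sum>j=0..n. real (n choose j) * (x * s) ^ j * (1 - x) ^ (n - j)))"
  proof -
    have e: "s powr (real j - real n * b) = s powr (- (real n * b)) * s ^ j" for j
    proof -
      have "s powr (real j - real n * b) = s powr (- (real n * b) + real j)" by simp
      also have "\<dots> = s powr (- (real n * b)) * s powr (real j)" by (rule powr_add)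
      also have "\<dots> = s powr (- (real n * b)) * s ^ j" using s1 by (simp add: powr_realpow)
      finally show ?thesis .
    qed
    show ?thesis unfolding sum_distrib_left e p_def
      by (intro sum.cong refl) (simp add: power_mult_distrib)
  qed
  also have "\<dots> = M * (s powr (- (real n * b)) * (x * s + (1 - x)) ^ n)"
    using binomial_ring[of "x * s" "1 - x" n] by (simp add: atMost_atLeast0)
  also have "\<dots> = M * exp (- real n * rfun x b)"
    using chernoff_identity[OF x assms(3), of n] unfolding s_def by simp
  finally show "\<bar>bernstein n f x - f x\<bar> \<le> supnorm01 (\<lambda>t. f t - c) * exp (- real n * rfun x b)"
    unfolding M_def .
qed

end
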